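(* For all integers $n,m\ge 2$, \[ \gamma_{2t}(K_n\Box K_m)+1\le\gamma_{2t}(K_{n+1}\Box K_{m+1})\le\gamma_{2t}(K_n\Box K_m)+2. \]
   Context: For a graph $G=(V,E)$, a set $S\subseteq V$ is a total $2$-dominating set if every vertex of $V$ (including those in $S$) is adjacent to at least $2$ vertices of $S$; $\gamma_{2t}(G)$ is the minimum cardinality of such a set. $G\Box H$ denotes the Cartesian product: vertex set $V(G)\times V(H)$, with $(u_1,v_1)\sim(u_2,v_2)$ iff either $u_1=u_2$ and $v_1\sim v_2$, or $v_1=v_2$ and $u_1\sim u_2$. $K_n$ is the complete graph on $n$ vertices. *)

theory Defs
  imports Main
begin

text \<open>A graph is given by a vertex set V and a symmetric, irreflexive adjacency relation adj.\<close>

definition total_k_dominating :: "nat \<Rightarrow> 'a set \<Rightarrow> ('a \<Rightarrow> 'a \<Rightarrow> bool) \<Rightarrow> 'a set \<Rightarrow> bool" where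
  "total_k_dominating k V adj S \<longleftrightarrow>
     S \<subseteq> V \<and> (\<forall>v\<in>V. card {u\<in>S. adj v u} \<ge> k)"

definition gamma_2t :: "'a set \<Rightarrow> ('a \<Rightarrow> 'a \<Rightarrow> bool) \<Rightarrow> nat" where
  "gamma_2t V adj = Min (card ` {S. total_k_dominating 2 V adj S})"

definition complete_adj :: "nat \<Rightarrow> nat \<Rightarrow> bool" where
  "complete_adj u v \<longleftrightarrow> u \<noteq> v"

definition cart_adj :: "('a \<Rightarrow> 'a \<Rightarrow> bool) \<Rightarrow> ('b \<Rightarrow> 'b \<Rightarrow> bool) \<Rightarrow> 'a \<times> 'b \<Rightarrow> 'a \<times> 'b \<Rightarrow> bool" where
  "cart_adj adjG adjH p q \<longleftrightarrow>
     (fst p = fst q \<and> adjH (snd p) (snd q)) \<or> (snd p = snd q \<and> adjG (fst p) (fst q))"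

definition gamma_2t_KK :: "nat \<Rightarrow> nat \<Rightarrow> nat" where
  "gamma_2t_KK n m = gamma_2t ({0..<n} \<times> {0..<m}) (cart_adj complete_adj complete_adj)"

end

theory Submission
  imports Defs
begin


abbreviation AJ :: "nat\<times>nat \<Rightarrow> nat\<times>nat \<Rightarrow> bool" where "AJ \<equiv> cart_adj complete_adj complete_adj"

lemma adj_iff: "AJ (i,j) (k,l) \<longleftrightarrow> (i=k \<and> j\<noteq>l) \<or> (j=l \<and> i\<noteq>k)"
  by (auto simp: cart_adj_def complete_adj_def)

definition RR :: "(nat\<times>nat) set \<Rightarrow> nat \<Rightarrow> nat set" where "RR S i = {y. (i,y)\<in>S}"
definition CC :: "(nat\<times>nat) set \<Rightarrow> nat \<Rightarrow> nat set" where "CC S j = {x. (x,j)\<in>S}"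

lemma fin_RR: "S \<subseteq> {0..<n}\<times>{0..<m} \<Longrightarrow> finite (RR S i)"
  by (rule finite_subset[of _ "{0..<m}"]) (auto simp: RR_def)
lemma fin_CC: "S \<subseteq> {0..<n}\<times>{0..<m} \<Longrightarrow> finite (CC S j)"
  by (rule finite_subset[of _ "{0..<n}"]) (auto simp: CC_def)

lemma nbr_eq: "{u\<in>S. AJ (i,j) u} = Pair i ` (RR S i - {j}) \<union> (\<lambda>x. (x,j)) ` (CC S j - {i})"
  by (auto simp: RR_def CC_def cart_adj_def complete_adj_def image_iff)

lemma cnt: assumes "S \<subseteq> {0..<n}\<times>{0..<m}"
  shows "card {u\<in>S. AJ (i,j) u} = card (RR S i - {j}) + card (CC S j - {i})"
proof -
  have "card (Pair i ` (RR S i - {j}) \<union> (\<lambda>x. (x,j)) ` (CC S j - {i}))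
        = card (Pair i ` (RR S i - {j})) + card ((\<lambda>x. (x,j)) ` (CC S j - {i}))"
    by (rule card_Un_disjoint) (auto simp: fin_RR[OF assms] fin_CC[OF assms])
  also have "\<dots> = card (RR S i - {j}) + card (CC S j - {i})"
    by (simp add: card_image inj_on_def)
  finally show ?thesis by (simp add: nbr_eq)
qed

lemma two_wit: assumes "finite S" "u1 \<in> S" "u2 \<in> S" "u1 \<noteq> u2" "AJ v u1" "AJ v u2"
  shows "2 \<le> card {u\<in>S. AJ v u}"
proof -
  have "{u1,u2} \<subseteq> {u\<in>S. AJ v u}" using assms by auto
  moreover have "finite {u\<in>S. AJ v u}" using assms by auto
  ultimately have "card {u1,u2} \<le> card {u\<in>S. AJ v u}" by (rule card_mono[rotated])
  thus ?thesis using assms by simp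
qed

lemma fin_doms: "finite {S. total_k_dominating k V adj S}" if "finite V"
  by (rule finite_subset[of _ "Pow V"]) (auto simp: total_k_dominating_def that)

lemma gamma_le: assumes "total_k_dominating 2 ({0..<n}\<times>{0..<m}) AJ S"
  shows "gamma_2t_KK n m \<le> card S"
  unfolding gamma_2t_KK_def gamma_2t_def
  by (rule Min_le) (use assms fin_doms[of "{0..<n}\<times>{0..<m}"] in auto)

lemma gamma_ge: assumes "total_k_dominating 2 ({0..<n}\<times>{0..<m}) AJ S0"
  and "\<And>S. total_k_dominating 2 ({0..<n}\<times>{0..<m}) AJ S \<Longrightarrow> P (card S)"
  shows "P (gamma_2t_KK n m)"
proof -
  have "Min (card ` {S. total_k_dominating 2 ({0..<n}\<times>{0..<m}) AJ S}) \<in> card ` {S. total_k_dominating 2 ({0..<n}\<times>{0..<m}) AJ S}"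
    by (rule Min_in) (use assms(1) fin_doms[of "{0..<n}\<times>{0..<m}"] in auto)
  then show ?thesis using assms(2) unfolding gamma_2t_KK_def gamma_2t_def by auto
qed



lemma rows2: assumes "2 \<le> n" "2 \<le> m"
  shows "total_k_dominating 2 ({0..<n}\<times>{0..<m}) AJ ({0,1}\<times>{0..<m})"
  unfolding total_k_dominating_def
proof (intro conjI ballI)
  show "{0,1}\<times>{0..<m} \<subseteq> {0..<n}\<times>{0..<m}" using assms by auto
next
  fix v assume "v \<in> {0..<n}\<times>{0..<m}"
  then obtain i j where v: "v = (i,j)" "i<n" "j<m" by auto
  show "2 \<le> card {u\<in>{0,1}\<times>{0..<m}. AJ v u}"
  proof (cases "i \<in> {0,1}")
    case True
    let ?j' = "if j = 0 then 1 else 0::nat"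
    show ?thesis
      by (rule two_wit[of _ "(1-i,j)" "(i,?j')"]) (use True v assms in \<open>auto simp: adj_iff\<close>)
  next
    case False
    show ?thesis
      by (rule two_wit[of _ "(0,j)" "(1,j)"]) (use False v assms in \<open>auto simp: adj_iff\<close>)
  qed
qed

lemma cols2: assumes "2 \<le> n" "2 \<le> m"
  shows "total_k_dominating 2 ({0..<n}\<times>{0..<m}) AJ ({0..<n}\<times>{0,1})"
  unfolding total_k_dominating_def
proof (intro conjI ballI)
  show "{0..<n}\<times>{0,1} \<subseteq> {0..<n}\<times>{0..<m}" using assms by auto
next
  fix v assume "v \<in> {0..<n}\<times>{0..<m}"
  then obtain i j where v: "v = (i,j)" "i<n" "j<m" by auto
  show "2 \<le> card {u\<in>{0..<n}\<times>{0,1}. AJ v u}"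
  proof (cases "j \<in> {0,1}")
    case True
    let ?i' = "if i = 0 then 1 else 0::nat"
    show ?thesis
      by (rule two_wit[of _ "(i,1-j)" "(?i',j)"]) (use True v assms in \<open>auto simp: adj_iff\<close>)
  next
    case False
    show ?thesis
      by (rule two_wit[of _ "(i,0)" "(i,1)"]) (use False v assms in \<open>auto simp: adj_iff\<close>)
  qed
qed

lemma card_rows2: "card ({0::nat,1}\<times>{0..<m::nat}) = 2*m" by (simp add: card_cartesian_product)
lemma card_cols2: "card ({0..<n::nat}\<times>{0::nat,1}) = 2*n" by (simp add: card_cartesian_product)

definition cross :: "nat \<Rightarrow> nat \<Rightarrow> (nat\<times>nat) set" where
  "cross n m = ({0}\<times>{0..<m}) \<union> ({0..<n}\<times>{0})"

lemma card_cross: assumes "1 \<le> n" "1 \<le> m" shows "card (cross n m) = n + m - 1"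
proof -
  have "cross n m = ({0}\<times>{0..<m}) \<union> ({1..<n}\<times>{0})" unfolding cross_def using assms by auto
  moreover have "card (({0}\<times>{0..<m}) \<union> ({1..<n}\<times>{0})) = m + (n - 1)"
    by (subst card_Un_disjoint) (auto simp: card_cartesian_product)
  ultimately show ?thesis using assms by simp
qed

lemma cross_ok: assumes "3 \<le> n" "3 \<le> m"
  shows "total_k_dominating 2 ({0..<n}\<times>{0..<m}) AJ (cross n m)"
  unfolding total_k_dominating_def
proof (intro conjI ballI)
  show "cross n m \<subseteq> {0..<n}\<times>{0..<m}" using assms by (auto simp: cross_def)
next
  have fin: "finite (cross n m)" by (simp add: cross_def)
  fix v assume "v \<in> {0..<n}\<times>{0..<m}"
  then obtain i j where v: "v = (i,j)" "i<n" "j<m" by auto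
  show "2 \<le> card {u\<in>cross n m. AJ v u}"
  proof (cases "i = 0")
    case i0: True
    show ?thesis
    proof (cases "j = 0")
      case True
      show ?thesis
        by (rule two_wit[OF fin, of "(0,1)" "(1,0)"]) (use True i0 v assms in \<open>auto simp: adj_iff cross_def\<close>)
    next
      case False
      let ?j' = "if j = 1 then 2 else 1::nat"
      show ?thesis
        by (rule two_wit[OF fin, of "(0,0)" "(0,?j')"]) (use False i0 v assms in \<open>auto simp: adj_iff cross_def\<close>)
    qed
  next
    case i0: False
    show ?thesis
    proof (cases "j = 0")
      case True
      let ?i' = "if i = 1 then 2 else 1::nat"
      show ?thesis
        by (rule two_wit[OF fin, of "(0,0)" "(?i',0)"]) (use True i0 v assms in \<open>auto simp: adj_iff cross_def\<close>)
    next
      case False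
      show ?thesis
        by (rule two_wit[OF fin, of "(0,j)" "(i,0)"]) (use False i0 v assms in \<open>auto simp: adj_iff cross_def\<close>)
    qed
  qed
qed

definition star :: "nat \<Rightarrow> nat \<Rightarrow> nat \<Rightarrow> nat \<Rightarrow> (nat\<times>nat) set" where
  "star n m x y = (\<lambda>i. (i, (i-x) mod y)) ` {x..<n} \<union> (\<lambda>j. ((j-y) mod x, j)) ` {y..<m}"

lemma card_star: assumes "1 \<le> x" "1 \<le> y"
  shows "card (star n m x y) = (n - x) + (m - y)"
  unfolding star_def
proof (subst card_Un_disjoint)
  show "(\<lambda>i. (i, (i-x) mod y)) ` {x..<n} \<inter> (\<lambda>j. ((j-y) mod x, j)) ` {y..<m} = {}"
    using assms by auto
qed (auto simp: card_image inj_on_def)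



lemma star_mem1: "x \<le> i \<Longrightarrow> i < n \<Longrightarrow> (i, (i-x) mod y) \<in> star n m x y"
  unfolding star_def by auto
lemma star_mem2: "y \<le> j \<Longrightarrow> j < m \<Longrightarrow> ((j-y) mod x, j) \<in> star n m x y"
  unfolding star_def by auto
lemma star_rl: assumes "i < x" "y + i + k*x < m" shows "(i, y+i+k*x) \<in> star n m x y"
proof -
  have "(y+i+k*x - y) mod x = i" using assms by simp
  with star_mem2[where y=y and j="y+i+k*x" and m=m and n=n and x=x] show ?thesis using assms by simp
qed
lemma star_cl: assumes "j < y" "x + j + k*y < n" shows "(x+j+k*y, j) \<in> star n m x y"
proof -
  have "(x+j+k*y - x) mod y = j" using assms by simp
  with star_mem1[where x=x and i="x+j+k*y" and n=n and y=y and m=m] show ?thesis using assms by simp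
qed

lemma star_ok: assumes xy: "1 \<le> x" "1 \<le> y" "x + 3*y \<le> n" "3*x + y \<le> m"
  shows "total_k_dominating 2 ({0..<n}\<times>{0..<m}) AJ (star n m x y)"
  unfolding total_k_dominating_def
proof (intro conjI ballI)
  have "y \<le> m" "x \<le> n" using xy by linarith+
  moreover have "\<And>a. a mod y < y" "\<And>a. a mod x < x" using xy by auto
  ultimately have "\<And>a. a mod y < m" "\<And>a. a mod x < n" by (meson order.strict_trans2)+
  then show "star n m x y \<subseteq> {0..<n}\<times>{0..<m}" unfolding star_def
    by auto
next
  have fin: "finite (star n m x y)" by (simp add: star_def)
  fix v assume "v \<in> {0..<n}\<times>{0..<m}"
  then obtain i j where v: "v = (i,j)" "i<n" "j<m" by auto
  show "2 \<le> card {u\<in>star n m x y. AJ v u}"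
  proof (cases "i < x")
    case ix: True
    show ?thesis
    proof (cases "j < y")
      case True
      have "(i, y+i+0*x) \<in> star n m x y" by (rule star_rl) (use ix xy in auto)
      moreover have "(i, y+i+1*x) \<in> star n m x y" by (rule star_rl) (use ix xy in auto)
      ultimately show ?thesis
        by (intro two_wit[OF fin, of "(i, y+i+0*x)" "(i,y+i+1*x)"]) (use True ix v xy in \<open>auto simp: adj_iff\<close>)
    next
      case False
      have m: "\<And>k. k \<le> 2 \<Longrightarrow> (i, y+i+k*x) \<in> star n m x y"
      proof (rule star_rl[OF ix])
        fix k :: nat assume "k \<le> 2"
        then have "k * x \<le> 2 * x" by simp
        then show "y + i + k*x < m" using ix xy by linarith
      qed
      show ?thesis
      proof (cases "j = y+i+0*x")
        case True
        show ?thesis by (rule two_wit[OF fin m[of 1] m[of 2]]) (use True xy v in \<open>auto simp: adj_iff\<close>)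
      next
        case F0: False
        show ?thesis
        proof (cases "j = y+i+1*x")
          case True
          show ?thesis by (rule two_wit[OF fin m[of 0] m[of 2]]) (use True xy v in \<open>auto simp: adj_iff\<close>)
        next
          case False
          show ?thesis by (rule two_wit[OF fin m[of 0] m[of 1]]) (use False F0 xy v in \<open>auto simp: adj_iff\<close>)
        qed
      qed
    qed
  next
    case ix: False
    show ?thesis
    proof (cases "j < y")
      case jy: True
      have m: "\<And>k. k \<le> 2 \<Longrightarrow> (x+j+k*y, j) \<in> star n m x y"
      proof (rule star_cl[OF jy])
        fix k :: nat assume "k \<le> 2"
        then have "k * y \<le> 2 * y" by simp
        then show "x + j + k*y < n" using jy xy by linarith
      qed
      show ?thesis
      proof (cases "i = x+j+0*y")
        case True
        show ?thesis by (rule two_wit[OF fin m[of 1] m[of 2]]) (use True xy v in \<open>auto simp: adj_iff\<close>)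
      next
        case F0: False
        show ?thesis
        proof (cases "i = x+j+1*y")
          case True
          show ?thesis by (rule two_wit[OF fin m[of 0] m[of 2]]) (use True xy v in \<open>auto simp: adj_iff\<close>)
        next
          case False
          show ?thesis by (rule two_wit[OF fin m[of 0] m[of 1]]) (use False F0 xy v in \<open>auto simp: adj_iff\<close>)
        qed
      qed
    next
      case False
      have a: "(i, (i-x) mod y) \<in> star n m x y" by (rule star_mem1) (use ix v in auto)
      have b: "((j-y) mod x, j) \<in> star n m x y" by (rule star_mem2) (use False v in auto)
      have c1: "(i-x) mod y < y" "(j-y) mod x < x" using xy by auto
      show ?thesis by (rule two_wit[OF fin a b]) (use c1 False ix v in \<open>auto simp: adj_iff\<close>)
    qed
  qed
qed



lemma card_rowsP: assumes "S \<subseteq> {0..<n}\<times>{0..<m}"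
  shows "card {u\<in>S. P (fst u)} = (\<Sum>i<n. if P i then card (RR S i) else 0)"
proof -
  have "{u\<in>S. P (fst u)} = Sigma {i\<in>{..<n}. P i} (RR S)"
    using assms by (auto simp: RR_def)
  then have "card {u\<in>S. P (fst u)} = (\<Sum>i\<in>{i\<in>{..<n}. P i}. card (RR S i))"
    using fin_RR[OF assms] by (simp add: card_SigmaI)
  also have "\<dots> = (\<Sum>i<n. if P i then card (RR S i) else 0)"
    by (rule sum.inter_filter) simp
  finally show ?thesis .
qed

lemma card_colsP: assumes "S \<subseteq> {0..<n}\<times>{0..<m}"
  shows "card {u\<in>S. P (snd u)} = (\<Sum>j<m. if P j then card (CC S j) else 0)"
proof -
  have "{u\<in>S. P (snd u)} = (\<lambda>(j,x). (x,j)) ` Sigma {j\<in>{..<m}. P j} (CC S)"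
    using assms by (auto simp: CC_def image_iff)
  moreover have "inj_on (\<lambda>(j,x). (x,j)) (Sigma {j\<in>{..<m}. P j} (CC S))"
    by (auto simp: inj_on_def)
  ultimately have "card {u\<in>S. P (snd u)} = (\<Sum>j\<in>{j\<in>{..<m}. P j}. card (CC S j))"
    using fin_CC[OF assms] by (simp add: card_image card_SigmaI)
  also have "\<dots> = (\<Sum>j<m. if P j then card (CC S j) else 0)"
    by (rule sum.inter_filter) simp
  finally show ?thesis .
qed

lemma card_rows: "S \<subseteq> {0..<n}\<times>{0..<m} \<Longrightarrow> card S = (\<Sum>i<n. card (RR S i))"
  using card_rowsP[of S n m "\<lambda>_. True"] by simp
lemma card_cols: "S \<subseteq> {0..<n}\<times>{0..<m} \<Longrightarrow> card S = (\<Sum>j<m. card (CC S j))"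
  using card_colsP[of S n m "\<lambda>_. True"] by simp

lemma lower:
  assumes T: "total_k_dominating 2 ({0..<n}\<times>{0..<m}) AJ S"
  shows "2*m \<le> card S \<or> 2*n \<le> card S \<or> (3*(n+m) \<le> 4*card S \<and> n \<le> card S \<and> m \<le> card S)"
proof -
  have sub: "S \<subseteq> {0..<n}\<times>{0..<m}" using T by (simp add: total_k_dominating_def)
  have dom: "\<And>i j. i<n \<Longrightarrow> j<m \<Longrightarrow> 2 \<le> card (RR S i - {j}) + card (CC S j - {i})"
    using T by (auto simp: total_k_dominating_def cnt[OF sub])
  have finR: "\<And>i. finite (RR S i)" and finC: "\<And>j. finite (CC S j)"
    using fin_RR[OF sub] fin_CC[OF sub] by auto
  show ?thesis
  proof (cases "\<exists>i<n. RR S i = {}")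
    case True
    then obtain i where i: "i<n" "RR S i = {}" by auto
    have "\<And>j. j<m \<Longrightarrow> 2 \<le> card (CC S j)"
    proof -
      fix j assume j: "j<m"
      have "i \<notin> CC S j" using i by (auto simp: RR_def CC_def)
      then show "2 \<le> card (CC S j)" using dom[OF i(1) j] i by simp
    qed
    then have "(\<Sum>j<m. 2) \<le> (\<Sum>j<m. card (CC S j))" by (intro sum_mono) auto
    then show ?thesis using card_cols[OF sub] by simp
  next
    case nr: False
    show ?thesis
    proof (cases "\<exists>j<m. CC S j = {}")
      case True
      then obtain j where j: "j<m" "CC S j = {}" by auto
      have "\<And>i. i<n \<Longrightarrow> 2 \<le> card (RR S i)"
      proof -
        fix i assume i: "i<n"
        have "j \<notin> RR S i" using j by (auto simp: RR_def CC_def)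
        then show "2 \<le> card (RR S i)" using dom[OF i j(1)] j by simp
      qed
      then have "(\<Sum>i<n. 2) \<le> (\<Sum>i<n. card (RR S i))" by (intro sum_mono) auto
      then show ?thesis using card_rows[OF sub] by simp
    next
      case nc: False
      have r1: "\<And>i. i<n \<Longrightarrow> 1 \<le> card (RR S i)" using nr finR
        by (metis card_0_eq less_one not_le)
      have c1: "\<And>j. j<m \<Longrightarrow> 1 \<le> card (CC S j)" using nc finC
        by (metis card_0_eq less_one not_le)
      have geN: "n \<le> card S"
      proof -
        have "(\<Sum>i<n. 1) \<le> (\<Sum>i<n. card (RR S i))" by (intro sum_mono) (use r1 in auto)
        then show ?thesis using card_rows[OF sub] by simp
      qed
      have geM: "m \<le> card S"
      proof -
        have "(\<Sum>j<m. 1) \<le> (\<Sum>j<m. card (CC S j))" by (intro sum_mono) (use c1 in auto)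
        then show ?thesis using card_cols[OF sub] by simp
      qed
      define r where "r i = card (RR S i)" for i
      define c where "c j = card (CC S j)" for j
      have pr: "\<And>i. i<n \<Longrightarrow> 3 + (if 3 \<le> r i then r i else 0) \<le> 2 * r i + (if r i = 1 then r i else 0)"
        using r1 unfolding r_def by fastforce
      have pc: "\<And>j. j<m \<Longrightarrow> 3 + (if 3 \<le> c j then c j else 0) \<le> 2 * c j + (if c j = 1 then c j else 0)"
        using c1 unfolding c_def by fastforce
      have sr: "(\<Sum>i<n. 3 + (if 3 \<le> r i then r i else 0)) \<le> (\<Sum>i<n. 2 * r i + (if r i = 1 then r i else 0))"
        by (rule sum_mono) (use pr in auto)
      have sc: "(\<Sum>j<m. 3 + (if 3 \<le> c j then c j else 0)) \<le> (\<Sum>j<m. 2 * c j + (if c j = 1 then c j else 0))"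
        by (rule sum_mono) (use pc in auto)
      have A3: "card {u\<in>S. 3 \<le> r (fst u)} = (\<Sum>i<n. if 3 \<le> r i then r i else 0)"
        unfolding r_def by (rule card_rowsP[OF sub])
      have A1: "card {u\<in>S. r (fst u) = 1} = (\<Sum>i<n. if r i = 1 then r i else 0)"
        unfolding r_def by (rule card_rowsP[OF sub])
      have B3: "card {u\<in>S. 3 \<le> c (snd u)} = (\<Sum>j<m. if 3 \<le> c j then c j else 0)"
        unfolding c_def by (rule card_colsP[OF sub])
      have B1: "card {u\<in>S. c (snd u) = 1} = (\<Sum>j<m. if c j = 1 then c j else 0)"
        unfolding c_def by (rule card_colsP[OF sub])
      have finS: "finite S" using sub finite_subset by blast
      have L1: "card {u\<in>S. r (fst u) = 1} \<le> card {u\<in>S. 3 \<le> c (snd u)}"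
      proof (rule card_mono)
        show "finite {u\<in>S. 3 \<le> c (snd u)}" using finS by simp
        show "{u\<in>S. r (fst u) = 1} \<subseteq> {u\<in>S. 3 \<le> c (snd u)}"
        proof safe
          fix i j assume ij: "(i,j) \<in> S" "r (fst (i,j)) = 1"
          have ji: "j \<in> RR S i" "i \<in> CC S j" using ij by (auto simp: RR_def CC_def)
          have "RR S i = {j}" using ij ji unfolding r_def by (auto simp: card_1_singleton_iff)
          then have "2 \<le> card (CC S j - {i})" using dom[of i j] ij sub by auto
          then show "3 \<le> c (snd (i,j))" unfolding c_def using ji finC by (simp add: card_Diff_singleton)
        qed
      qed
      have L2: "card {u\<in>S. c (snd u) = 1} \<le> card {u\<in>S. 3 \<le> r (fst u)}"
      proof (rule card_mono)
        show "finite {u\<in>S. 3 \<le> r (fst u)}" using finS by simp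
        show "{u\<in>S. c (snd u) = 1} \<subseteq> {u\<in>S. 3 \<le> r (fst u)}"
        proof safe
          fix i j assume ij: "(i,j) \<in> S" "c (snd (i,j)) = 1"
          have ji: "j \<in> RR S i" "i \<in> CC S j" using ij by (auto simp: RR_def CC_def)
          have "CC S j = {i}" using ij ji unfolding c_def by (auto simp: card_1_singleton_iff)
          then have "2 \<le> card (RR S i - {j})" using dom[of i j] ij sub by auto
          then show "3 \<le> r (fst (i,j))" unfolding r_def using ji finR by (simp add: card_Diff_singleton)
        qed
      qed
      have CR: "card S = (\<Sum>i<n. r i)" unfolding r_def by (rule card_rows[OF sub])
      have CCs: "card S = (\<Sum>j<m. c j)" unfolding c_def by (rule card_cols[OF sub])
      have "3*n + (\<Sum>i<n. if 3 \<le> r i then r i else 0) \<le> 2 * card S + (\<Sum>i<n. if r i = 1 then r i else 0)"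
        using sr CR by (simp add: sum.distrib sum_distrib_left)
      moreover have "3*m + (\<Sum>j<m. if 3 \<le> c j then c j else 0) \<le> 2 * card S + (\<Sum>j<m. if c j = 1 then c j else 0)"
        using sc CCs by (simp add: sum.distrib sum_distrib_left)
      ultimately have "3*(n+m) \<le> 4 * card S" using A3 A1 B3 B1 L1 L2
        by (simp only: add_mult_distrib2)
      then show ?thesis using geN geM by simp
    qed
  qed
qed



lemma small: "\<forall>a\<in>set [2..<14]. \<forall>b\<in>set [2..<24]. (a \<le> b \<and> 3*b+5 < 5*a \<and> 10 \<le> a+b) \<longrightarrow>
   (\<exists>x\<in>set [1..<14]. \<exists>y\<in>set [1..<14]. x+3*y\<le>a \<and> 3*x+y\<le>b \<and> 4*((a-x)+(b-y)) \<le> 3*(a+b)+(5::nat))"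
  by code_simp

lemma wit_le: fixes a b :: nat
  assumes "2 \<le> a" "a \<le> b" "3*b+5 < 5*a" "10 \<le> a+b"
  shows "\<exists>x y. 1\<le>x \<and> 1\<le>y \<and> x+3*y\<le>a \<and> 3*x+y\<le>b \<and> 4*((a-x)+(b-y)) \<le> 3*(a+b)+5"
proof (cases "a < 14")
  case True
  then have "a \<in> set [2..<14]" "b \<in> set [2..<24]" using assms
    by (simp_all only: set_upt atLeastLessThan_iff) linarith+
  with small assms obtain x y where "x \<in> set [1..<14]" "y \<in> set [1..<14]"
    "x+3*y\<le>a \<and> 3*x+y\<le>b \<and> 4*((a-x)+(b-y)) \<le> 3*(a+b)+5" by blast
  then show ?thesis by (simp only: set_upt atLeastLessThan_iff) (metis Suc_le_eq One_nat_def)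
next
  case False
  define s where "s = (a+b-1) div 4"
  define x where "x = (b-s) div 2"
  have s1: "4*s \<le> a+b-1" "a+b-1 \<le> 4*s+3" unfolding s_def by linarith+
  have x1: "2*x \<le> b-s" "b-s \<le> 2*x+1" unfolding x_def by linarith+
  have sb: "s \<le> b" using s1 assms by linarith
  have xs: "x + 1 \<le> s" using s1 x1 sb False assms by linarith
  have "1\<le>x \<and> 1\<le>s-x \<and> x+3*(s-x)\<le>a \<and> 3*x+(s-x)\<le>b \<and> 4*((a-x)+(b-(s-x))) \<le> 3*(a+b)+5"
  proof (intro conjI)
    have xa: "x \<le> a" "s - x \<le> b" using xs sb s1 assms by linarith+
    have e: "(a-x)+(b-(s-x)) = a+b-s" using xa xs by linarith
    show "4*((a-x)+(b-(s-x))) \<le> 3*(a+b)+5" unfolding e using s1 sb assms by (simp add: diff_mult_distrib2)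
  qed (use s1 x1 sb xs False assms in linarith)+
  then show ?thesis by blast
qed



lemma ub: assumes "2 \<le> a" "2 \<le> b"
  shows "gamma_2t_KK a b \<le> 2*a" "gamma_2t_KK a b \<le> 2*b"
    "3 \<le> a \<Longrightarrow> 3 \<le> b \<Longrightarrow> gamma_2t_KK a b \<le> a+b-1"
    "1 \<le> x \<Longrightarrow> 1 \<le> y \<Longrightarrow> x+3*y \<le> a \<Longrightarrow> 3*x+y \<le> b \<Longrightarrow> gamma_2t_KK a b \<le> (a-x)+(b-y)"
proof -
  show "gamma_2t_KK a b \<le> 2*a" using gamma_le[OF cols2[OF assms]] card_cols2 by simp
  show "gamma_2t_KK a b \<le> 2*b" using gamma_le[OF rows2[OF assms]] card_rows2 by simp
  show "3 \<le> a \<Longrightarrow> 3 \<le> b \<Longrightarrow> gamma_2t_KK a b \<le> a+b-1"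
    using gamma_le[OF cross_ok] card_cross by simp
  show "1 \<le> x \<Longrightarrow> 1 \<le> y \<Longrightarrow> x+3*y \<le> a \<Longrightarrow> 3*x+y \<le> b \<Longrightarrow> gamma_2t_KK a b \<le> (a-x)+(b-y)"
    using gamma_le[OF star_ok] card_star by metis
qed

lemma bal: assumes "2 \<le> a" "2 \<le> b" "b < 2*a" "a < 2*b"
  shows "4 * gamma_2t_KK a b \<le> 3*(a+b)+5"
proof (cases "a \<le> b")
  case True
  show ?thesis
  proof (cases "5*a \<le> 3*b+5")
    case True then show ?thesis using ub(1)[OF assms(1,2)] by (simp only: distrib_left; linarith)
  next
    case F1: False
    show ?thesis
    proof (cases "a+b \<le> 9")
      case True
      have "3 \<le> a" using F1 assms by linarith
      then have "gamma_2t_KK a b \<le> a+b-1" using ub(3)[OF assms(1,2)] \<open>a \<le> b\<close> by linarith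
      then show ?thesis using True \<open>3 \<le> a\<close> by (simp only: distrib_left; linarith)
    next
      case False
      obtain x y where "1\<le>x" "1\<le>y" "x+3*y\<le>a" "3*x+y\<le>b" "4*((a-x)+(b-y)) \<le> 3*(a+b)+5"
      proof -
        have "3*b+5 < 5*a" "10 \<le> a+b" using F1 False by linarith+
        from wit_le[OF assms(1) True this] that show thesis by auto
      qed
      moreover have "gamma_2t_KK a b \<le> (a-x)+(b-y)" using ub(4)[OF assms(1,2), of x y] calculation by blast
      ultimately show ?thesis by (meson le_trans mult_le_mono2)
    qed
  qed
next
  case F0: False
  show ?thesis
  proof (cases "5*b \<le> 3*a+5")
    case True then show ?thesis using ub(2)[OF assms(1,2)] by (simp only: distrib_left; linarith)
  next
    case F1: False
    show ?thesis
    proof (cases "a+b \<le> 9")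
      case True
      have "3 \<le> b" using F1 assms by linarith
      then have "gamma_2t_KK a b \<le> a+b-1" using ub(3)[OF assms(1,2)] F0 by linarith
      then show ?thesis using True \<open>3 \<le> b\<close> by (simp only: distrib_left; linarith)
    next
      case False
      obtain x y where "1\<le>x" "1\<le>y" "x+3*y\<le>b" "3*x+y\<le>a" "4*((b-x)+(a-y)) \<le> 3*(b+a)+5"
      proof -
        have "3*a+5 < 5*b" "10 \<le> b+a" "b \<le> a" using F1 False F0 by linarith+
        from wit_le[OF assms(2) this(3) this(1) this(2)] that show thesis by (auto simp: add.commute)
      qed
      moreover have "gamma_2t_KK a b \<le> (a-y)+(b-x)" using ub(4)[OF assms(1,2), of y x] calculation by simp
      ultimately show ?thesis by (simp add: add.commute)
    qed
  qed
qed

lemma lb: assumes "2 \<le> a" "2 \<le> b"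
  shows "2*b \<le> gamma_2t_KK a b \<or> 2*a \<le> gamma_2t_KK a b \<or>
    (3*(a+b) \<le> 4*gamma_2t_KK a b \<and> a \<le> gamma_2t_KK a b \<and> b \<le> gamma_2t_KK a b)"
  by (rule gamma_ge[OF rows2[OF assms]]) (rule lower)

theorem lemma11:
  fixes n m :: nat
  assumes "n \<ge> 2" and "m \<ge> 2"
  shows "gamma_2t_KK n m + 1 \<le> gamma_2t_KK (n+1) (m+1) \<and>
         gamma_2t_KK (n+1) (m+1) \<le> gamma_2t_KK n m + 2"
proof -
  define g where "g = gamma_2t_KK n m"
  define G where "G = gamma_2t_KK (n+1) (m+1)"
  have a2: "2 \<le> n+1" "2 \<le> m+1" using assms by auto
  have g1: "g \<le> 2*n" "g \<le> 2*m" unfolding g_def using ub(1,2)[OF assms] by auto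
  have G1: "G \<le> 2*(n+1)" "G \<le> 2*(m+1)" unfolding G_def using ub(1,2)[OF a2] by auto
  have gb: "m < 2*n \<Longrightarrow> n < 2*m \<Longrightarrow> 4*g \<le> 3*(n+m)+5" unfolding g_def using bal assms by blast
  have Gb: "m+1 < 2*(n+1) \<Longrightarrow> n+1 < 2*(m+1) \<Longrightarrow> 4*G \<le> 3*((n+1)+(m+1))+5"
    unfolding G_def using bal a2 by blast
  have gl: "2*m \<le> g \<or> 2*n \<le> g \<or> (3*(n+m) \<le> 4*g \<and> n \<le> g \<and> m \<le> g)"
    unfolding g_def using lb[OF assms] .
  have Gl: "2*(m+1) \<le> G \<or> 2*(n+1) \<le> G \<or> (3*((n+1)+(m+1)) \<le> 4*G \<and> n+1 \<le> G \<and> m+1 \<le> G)"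
    unfolding G_def using lb[OF a2] .
  have "g + 1 \<le> G"
  proof (cases "m < 2*n \<and> n < 2*m")
    case True
    then have "4*g \<le> 3*(n+m)+5" using gb by blast
    then show ?thesis using Gl g1 by (simp only: distrib_left; elim disjE conjE; linarith)
  next
    case False then show ?thesis using Gl g1 by (simp only: distrib_left; elim disjE conjE; linarith)
  qed
  moreover have "G \<le> g + 2"
  proof (cases "m+1 < 2*(n+1) \<and> n+1 < 2*(m+1)")
    case True
    then have "4*G \<le> 3*((n+1)+(m+1))+5" using Gb by blast
    then show ?thesis using gl G1 by (simp only: distrib_left; elim disjE conjE; linarith)
  next
    case False then show ?thesis using gl G1 by (simp only: distrib_left; elim disjE conjE; linarith)
  qed
  ultimately show ?thesis unfolding g_def G_def by simp
qed

thm_deps lemma11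

end
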